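(* Let $X$ be a stacked simplicial complex of dimension $d$ and $c$ a codimension one face of $X$. Let $m\ge 1$ and let $v\in V_m\setminus V_{m-1}$. Then there is a unique facet $f_v$ in $X_m$ containing $v$, and $f_v\setminus\{v\}\subseteq V_{m-1}$.
   Context: A simplicial complex $X$ on a finite vertex set $V$ is a family of subsets (faces) of $V$ closed under taking subsets, every element of $V$ lying in some face; facets are inclusion-maximal faces. $X$ is pure of dimension $d$ if every facet has $d+1$ elements; a codimension one face is a face with $d$ elements. $X$ is stacked if it is pure of some dimension $d$ and its facets can be ordered $F_0,F_1,\dots,F_k$ such that for each $p\ge 1$, $F_p$ contains exactly one vertex $v_p$ not in $F_0\cup\dots\cup F_{p-1}$, and $F_p\setminus\{v_p\}\subseteq F_j$ for some $j<p$. A walk is a sequence of facets $f_1,\dots,f_p$ ($p\ge 1$) such that each $f_i\cap f_{i+1}$ has exactly $d$ elements. Fix a codimension one face $c$. The distance from a facet $f$ to $c$ is the minimal $r\ge1$ such that there is a walk $f_1,\dots,f_r$ with $f_1=f$ and $c\subseteq f_r$. For $m\ge 0$, $X_m$ is the set of facets at distance $\le m$ from $c$ (so $X_0=\emptyset$ and $X_1$ is the set of facets containing $c$). $V_0$ is the vertex set of $c$, and for $m\ge1$, $V_m$ is the set of vertices lying in some facet of $X_m$. *)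

theory Defs
  imports Main "HOL-Library.Extended_Nat"
begin

definition simplicial_complex :: "'a set \<Rightarrow> 'a set set \<Rightarrow> bool" where
  "simplicial_complex V X \<longleftrightarrow> finite V \<and> (\<forall>F\<in>X. F \<subseteq> V)
     \<and> (\<forall>F\<in>X. \<forall>G. G \<subseteq> F \<longrightarrow> G \<in> X) \<and> (\<forall>v\<in>V. \<exists>F\<in>X. v \<in> F)"

definition facets :: "'a set set \<Rightarrow> 'a set set" where
  "facets X = {F \<in> X. \<forall>G\<in>X. F \<subseteq> G \<longrightarrow> G = F}"

definition pure :: "'a set set \<Rightarrow> nat \<Rightarrow> bool" where
  "pure X d \<longleftrightarrow> (\<forall>F\<in>facets X. card F = d + 1)"

definition stacked :: "'a set set \<Rightarrow> bool" where
  "stacked X \<longleftrightarrow> (\<exists>d. pure X d) \<and>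
     (\<exists>fs. fs \<noteq> [] \<and> distinct fs \<and> set fs = facets X \<and>
        (\<forall>p. 1 \<le> p \<and> p < length fs \<longrightarrow>
           (\<exists>v. fs ! p - \<Union>(set (take p fs)) = {v} \<and>
                (\<exists>j<p. fs ! p - {v} \<subseteq> fs ! j))))"

definition walk :: "'a set set \<Rightarrow> nat \<Rightarrow> 'a set list \<Rightarrow> bool" where
  "walk X d ws \<longleftrightarrow> ws \<noteq> [] \<and> set ws \<subseteq> facets X \<and>
     (\<forall>i. Suc i < length ws \<longrightarrow> card (ws ! i \<inter> ws ! Suc i) = d)"

text \<open>Distance from facet f to the codimension one face c (\<infinity> if no walk exists).\<close>
definition facet_dist :: "'a set set \<Rightarrow> nat \<Rightarrow> 'a set \<Rightarrow> 'a set \<Rightarrow> enat" where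
  "facet_dist X d c f = Inf {enat r | r. r \<ge> 1 \<and>
      (\<exists>ws. walk X d ws \<and> length ws = r \<and> hd ws = f \<and> c \<subseteq> last ws)}"

definition Xm :: "'a set set \<Rightarrow> nat \<Rightarrow> 'a set \<Rightarrow> nat \<Rightarrow> 'a set set" where
  "Xm X d c m = {f \<in> facets X. facet_dist X d c f \<le> enat m}"

definition Vm :: "'a set set \<Rightarrow> nat \<Rightarrow> 'a set \<Rightarrow> nat \<Rightarrow> 'a set" where
  "Vm X d c m = (if m = 0 then c else \<Union>(Xm X d c m))"

end

theory Submission
  imports Defs
begin

fun lvl :: "'a set set \<Rightarrow> nat \<Rightarrow> 'a set \<Rightarrow> nat \<Rightarrow> 'a set set" where
  "lvl S d c 0 = {}"
| "lvl S d c (Suc m) = {f \<in> S. c \<subseteq> f \<or> (\<exists>g\<in>lvl S d c m. card (f \<inter> g) = d)}"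

definition lvlV :: "'a set set \<Rightarrow> nat \<Rightarrow> 'a set \<Rightarrow> nat \<Rightarrow> 'a set" where
  "lvlV S d c m = (if m = 0 then c else \<Union>(lvl S d c m))"

lemma lvl_sub: "lvl S d c m \<subseteq> S"
  by (cases m) auto

lemma lvl_mono_Suc: "lvl S d c m \<subseteq> lvl S d c (Suc m)"
proof (induction m)
  case 0 then show ?case by simp
next
  case (Suc m)
  show ?case
  proof
    fix f assume "f \<in> lvl S d c (Suc m)"
    then have "f \<in> S" "c \<subseteq> f \<or> (\<exists>g\<in>lvl S d c m. card (f \<inter> g) = d)" by auto
    then show "f \<in> lvl S d c (Suc (Suc m))" using Suc.IH by (auto 0 3)
  qed
qed

lemma lvl_mono: "m \<le> n \<Longrightarrow> lvl S d c m \<subseteq> lvl S d c n"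
  by (induction n rule: dec_induct) (use lvl_mono_Suc in blast)+

lemma walk_Cons:
  assumes "ws \<noteq> []"
  shows "walk X d (f # ws) \<longleftrightarrow> f \<in> facets X \<and> card (f \<inter> hd ws) = d \<and> walk X d ws"
proof
  assume w: "walk X d (f # ws)"
  have "card ((f#ws) ! 0 \<inter> (f#ws) ! Suc 0) = d"
    using w assms unfolding walk_def by auto
  then have "card (f \<inter> hd ws) = d" using assms by (simp add: hd_conv_nth)
  moreover have "walk X d ws"
    unfolding walk_def
  proof (intro conjI allI impI)
    show "ws \<noteq> []" by fact
    show "set ws \<subseteq> facets X" using w unfolding walk_def by auto
    fix i assume "Suc i < length ws"
    then have "Suc (Suc i) < length (f#ws)" by simp
    then have "card ((f#ws) ! Suc i \<inter> (f#ws) ! Suc (Suc i)) = d"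
      using w unfolding walk_def by blast
    then show "card (ws ! i \<inter> ws ! Suc i) = d" by simp
  qed
  ultimately show "f \<in> facets X \<and> card (f \<inter> hd ws) = d \<and> walk X d ws"
    using w unfolding walk_def by auto
next
  assume h: "f \<in> facets X \<and> card (f \<inter> hd ws) = d \<and> walk X d ws"
  show "walk X d (f # ws)"
    unfolding walk_def
  proof (intro conjI allI impI)
    show "f # ws \<noteq> []" by simp
    show "set (f # ws) \<subseteq> facets X" using h unfolding walk_def by auto
    fix i assume i: "Suc i < length (f # ws)"
    show "card ((f # ws) ! i \<inter> (f # ws) ! Suc i) = d"
    proof (cases i)
      case 0 then show ?thesis using h assms by (simp add: hd_conv_nth)
    next
      case (Suc j)
      then have "Suc j < length ws" using i by simp
      then show ?thesis using h Suc unfolding walk_def by simp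
    qed
  qed
qed

lemma walk_lvl: "walk X d ws \<Longrightarrow> c \<subseteq> last ws \<Longrightarrow> hd ws \<in> lvl (facets X) d c (length ws)"
proof (induction ws)
  case Nil then show ?case by (simp add: walk_def)
next
  case (Cons f ws)
  show ?case
  proof (cases "ws = []")
    case True
    then show ?thesis using Cons.prems by (auto simp: walk_def)
  next
    case False
    then have w: "f \<in> facets X" "card (f \<inter> hd ws) = d" "walk X d ws"
      using walk_Cons Cons.prems(1) by blast+
    have "hd ws \<in> lvl (facets X) d c (length ws)"
      using Cons.IH w(3) Cons.prems(2) False by simp
    then show ?thesis using w False by auto
  qed
qed

lemma lvl_walk: "f \<in> lvl (facets X) d c m \<Longrightarrow>
  \<exists>ws. walk X d ws \<and> hd ws = f \<and> c \<subseteq> last ws \<and> 1 \<le> length ws \<and> length ws \<le> m"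
proof (induction m arbitrary: f)
  case 0 then show ?case by simp
next
  case (Suc m)
  then have f: "f \<in> facets X" and alt: "c \<subseteq> f \<or> (\<exists>g\<in>lvl (facets X) d c m. card (f \<inter> g) = d)"
    by auto
  show ?case
  proof (cases "c \<subseteq> f")
    case True
    then show ?thesis using f by (intro exI[of _ "[f]"]) (auto simp: walk_def)
  next
    case False
    then obtain g where g: "g \<in> lvl (facets X) d c m" "card (f \<inter> g) = d" using alt by blast
    obtain ws where ws: "walk X d ws" "hd ws = g" "c \<subseteq> last ws" "1 \<le> length ws" "length ws \<le> m"
      using Suc.IH[OF g(1)] by blast
    have ne: "ws \<noteq> []" using ws by auto
    have "walk X d (f # ws)" using walk_Cons[OF ne] f g ws by auto
    then show ?thesis using ws ne by (intro exI[of _ "f # ws"]) auto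
  qed
qed

lemma Inf_enat_le: "(Inf (A::enat set) \<le> enat m) \<longleftrightarrow> (\<exists>x\<in>A. x \<le> enat m)"
proof
  assume h: "Inf A \<le> enat m"
  have "A \<noteq> {}"
  proof
    assume "A = {}" then show False using h by (simp add: Inf_enat_def)
  qed
  then obtain k where "k \<in> A" by blast
  then have "Inf A \<in> A" by (rule wellorder_InfI)
  then show "\<exists>x\<in>A. x \<le> enat m" using h by blast
next
  assume "\<exists>x\<in>A. x \<le> enat m"
  then show "Inf A \<le> enat m" by (meson Inf_lower order_trans)
qed

lemma Xm_lvl: "Xm X d c m = lvl (facets X) d c m"
proof (intro set_eqI iffI)
  fix f assume "f \<in> Xm X d c m"
  then have f: "f \<in> facets X" and "facet_dist X d c f \<le> enat m" unfolding Xm_def by auto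
  then obtain r ws where r: "r \<ge> 1" "walk X d ws" "length ws = r" "hd ws = f" "c \<subseteq> last ws" "enat r \<le> enat m"
    unfolding facet_dist_def Inf_enat_le by blast
  then have "f \<in> lvl (facets X) d c r" using walk_lvl by blast
  then show "f \<in> lvl (facets X) d c m"
    using lvl_mono[of r m "facets X" d c] r by auto
next
  fix f assume h: "f \<in> lvl (facets X) d c m"
  then have f: "f \<in> facets X" using lvl_sub by blast
  obtain ws where ws: "walk X d ws" "hd ws = f" "c \<subseteq> last ws" "1 \<le> length ws" "length ws \<le> m"
    using lvl_walk[OF h] by blast
  have "facet_dist X d c f \<le> enat m"
    unfolding facet_dist_def Inf_enat_le using ws by fastforce
  then show "f \<in> Xm X d c m" using f unfolding Xm_def by auto
qed

lemma Vm_lvl: "Vm X d c m = lvlV (facets X) d c m"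
  unfolding Vm_def lvlV_def Xm_lvl by simp


lemma card_inter_old:
  assumes "card f = Suc d" "card F = Suc d" "u \<in> F" "u \<notin> f"
  shows "card (f \<inter> F) = d \<longleftrightarrow> F - {u} \<subseteq> f"
proof -
  have finF: "finite F" using assms(2) by (metis card.infinite nat.distinct(1))
  have cB: "card (F - {u}) = d" using assms(2,3) finF by simp
  have eq: "f \<inter> F = f \<inter> (F - {u})" using assms(4) by blast
  show ?thesis
  proof
    assume "card (f \<inter> F) = d"
    then have "card (f \<inter> (F - {u})) = card (F - {u})" using eq cB by simp
    then have "f \<inter> (F - {u}) = F - {u}"
      using card_subset_eq[of "F - {u}" "f \<inter> (F - {u})"] finF by auto
    then show "F - {u} \<subseteq> f" by blast
  next
    assume "F - {u} \<subseteq> f"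
    then have "f \<inter> (F - {u}) = F - {u}" by blast
    then show "card (f \<inter> F) = d" using eq cB by simp
  qed
qed

lemma card_inter_two:
  assumes "card f = Suc d" "card g = Suc d" "f \<noteq> g" "B \<subseteq> f \<inter> g" "card B = d"
  shows "card (f \<inter> g) = d"
proof -
  have finf: "finite f" using assms(1) by (metis card.infinite nat.distinct(1))
  have fing: "finite g" using assms(2) by (metis card.infinite nat.distinct(1))
  have "d \<le> card (f \<inter> g)" using assms(4,5) card_mono[of "f \<inter> g" B] finf by auto
  moreover have "card (f \<inter> g) < Suc d"
  proof -
    have "f \<inter> g \<noteq> f"
    proof
      assume "f \<inter> g = f"
      then have "f \<subseteq> g" by blast
      then have "f = g" using card_subset_eq[OF fing] assms(1,2) by simp
      then show False using assms(3) by simp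
    qed
    then have "f \<inter> g \<subset> f" by blast
    then show ?thesis using psubset_card_mono[OF finf] assms(1) by simp
  qed
  ultimately show ?thesis by simp
qed

lemma case1_lvl:
  assumes cards: "\<forall>f\<in>S. card f = Suc d" "card F = Suc d"
    and u: "u \<in> F" "\<forall>h\<in>S. u \<notin> h" "u \<notin> c"
  shows "f \<in> S \<Longrightarrow> f \<in> lvl (insert F S) d c m \<longleftrightarrow> f \<in> lvl S d c m"
proof (induction m arbitrary: f)
  case 0 then show ?case by simp
next
  case (Suc m)
  note fS = Suc.prems
  show ?case
  proof
    assume "f \<in> lvl (insert F S) d c (Suc m)"
    then have alt: "c \<subseteq> f \<or> (\<exists>g\<in>lvl (insert F S) d c m. card (f \<inter> g) = d)" by simp
    show "f \<in> lvl S d c (Suc m)"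
    proof (cases "c \<subseteq> f")
      case True then show ?thesis using fS by simp
    next
      case False
      then obtain g where g: "g \<in> lvl (insert F S) d c m" "card (f \<inter> g) = d" using alt by blast
      have gS': "g \<in> insert F S" using g(1) lvl_sub by blast
      show ?thesis
      proof (cases "g \<in> S")
        case True
        then have "g \<in> lvl S d c m" using Suc.IH g(1) by blast
        then show ?thesis using fS g(2) by auto
      next
        case False
        then have gF: "g = F" using gS' by simp
        have uf: "u \<notin> f" using u fS by blast
        have Bf: "F - {u} \<subseteq> f"
          using card_inter_old[of f d F u] cards fS u(1) uf g(2) gF by auto
        obtain m' where m': "m = Suc m'" using g(1) by (cases m) auto
        have "F \<in> lvl (insert F S) d c (Suc m')" using g(1) gF m' by simp
        then have altF: "c \<subseteq> F \<or> (\<exists>g'\<in>lvl (insert F S) d c m'. card (F \<inter> g') = d)" by simp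
        show ?thesis
        proof (cases "c \<subseteq> F")
          case True
          then have "c \<subseteq> f" using Bf u(3) by blast
          then show ?thesis using fS by simp
        next
          case False
          then obtain g' where g': "g' \<in> lvl (insert F S) d c m'" "card (F \<inter> g') = d" using altF by blast
          have "g' \<noteq> F" using g'(2) cards(2) by auto
          then have g'S: "g' \<in> S" using g'(1) lvl_sub by blast
          have ug': "u \<notin> g'" using u g'S by blast
          have "card (g' \<inter> F) = d" using g'(2) by (simp add: Int_commute)
          then have Bg': "F - {u} \<subseteq> g'"
            using card_inter_old[of g' d F u] cards g'S u(1) ug' by auto
          have "g' \<in> lvl (insert F S) d c m" using g'(1) lvl_mono_Suc m' by blast
          then have g'l: "g' \<in> lvl S d c m" using Suc.IH g'S by blast
          show ?thesis
          proof (cases "f = g'")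
            case True then show ?thesis using g'l lvl_mono_Suc by blast
          next
            case False
            have cB: "card (F - {u}) = d" using cards(2) u(1)
              by (metis card_Diff_singleton diff_Suc_1)
            have "card (f \<inter> g') = d"
              using card_inter_two[of f d g' "F - {u}"] cards fS g'S False Bf Bg' cB by auto
            then show ?thesis using fS g'l by auto
          qed
        qed
      qed
    qed
  next
    assume "f \<in> lvl S d c (Suc m)"
    then have alt: "c \<subseteq> f \<or> (\<exists>g\<in>lvl S d c m. card (f \<inter> g) = d)" by simp
    show "f \<in> lvl (insert F S) d c (Suc m)"
    proof (cases "c \<subseteq> f")
      case True then show ?thesis using fS by simp
    next
      case False
      then obtain g where g: "g \<in> lvl S d c m" "card (f \<inter> g) = d" using alt by blast
      have "g \<in> S" using g(1) lvl_sub by blast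
      then have "g \<in> lvl (insert F S) d c m" using Suc.IH g(1) by blast
      then show ?thesis using fS g(2) by auto
    qed
  qed
qed

lemma case1_F:
  assumes cards: "\<forall>f\<in>S. card f = Suc d" "card F = Suc d"
    and u: "u \<in> F" "\<forall>h\<in>S. u \<notin> h" "u \<notin> c"
  shows "F \<in> lvl (insert F S) d c (Suc m) \<longleftrightarrow> c \<subseteq> F \<or> (\<exists>g\<in>lvl S d c m. F - {u} \<subseteq> g)"
proof -
  have "(\<exists>g\<in>lvl (insert F S) d c m. card (F \<inter> g) = d) \<longleftrightarrow> (\<exists>g\<in>lvl S d c m. F - {u} \<subseteq> g)"
  proof
    assume "\<exists>g\<in>lvl (insert F S) d c m. card (F \<inter> g) = d"
    then obtain g where g: "g \<in> lvl (insert F S) d c m" "card (F \<inter> g) = d" by blast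
    have "g \<noteq> F" using g(2) cards(2) by auto
    then have gS: "g \<in> S" using g(1) lvl_sub by blast
    have "card (g \<inter> F) = d" using g(2) by (simp add: Int_commute)
    then have "F - {u} \<subseteq> g" using card_inter_old[of g d F u] cards gS u by auto
    moreover have "g \<in> lvl S d c m" using case1_lvl[OF cards u gS] g(1) by blast
    ultimately show "\<exists>g\<in>lvl S d c m. F - {u} \<subseteq> g" by blast
  next
    assume "\<exists>g\<in>lvl S d c m. F - {u} \<subseteq> g"
    then obtain g where g: "g \<in> lvl S d c m" "F - {u} \<subseteq> g" by blast
    have gS: "g \<in> S" using g(1) lvl_sub by blast
    have "card (g \<inter> F) = d" using card_inter_old[of g d F u] cards gS u g(2) by auto
    then have "card (F \<inter> g) = d" by (simp add: Int_commute)
    moreover have "g \<in> lvl (insert F S) d c m" using case1_lvl[OF cards u gS] g(1) by blast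
    ultimately show "\<exists>g\<in>lvl (insert F S) d c m. card (F \<inter> g) = d" by blast
  qed
  then show ?thesis by simp
qed

lemma case2_lvl:
  assumes cards: "\<forall>f\<in>S. card f = Suc d" "card F = Suc d"
    and u: "u \<in> F" "\<forall>h\<in>S. u \<notin> h" "u \<in> c" "c \<subseteq> F"
  shows "lvl (insert F S) d c (Suc k) = insert F (lvl S d (F - {u}) k)"
proof (induction k)
  case 0
  show ?case
  proof (intro set_eqI iffI)
    fix f assume "f \<in> lvl (insert F S) d c (Suc 0)"
    then have "f \<in> insert F S" "c \<subseteq> f" by simp_all
    then show "f \<in> insert F (lvl S d (F - {u}) 0)" using u by auto
  next
    fix f assume "f \<in> insert F (lvl S d (F - {u}) 0)"
    then have "f = F" by simp
    then show "f \<in> lvl (insert F S) d c (Suc 0)" using u by simp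
  qed
next
  case (Suc k)
  show ?case
  proof (intro set_eqI iffI)
    fix f assume f: "f \<in> lvl (insert F S) d c (Suc (Suc k))"
    show "f \<in> insert F (lvl S d (F - {u}) (Suc k))"
    proof (cases "f = F")
      case True then show ?thesis by simp
    next
      case False
      then have fS: "f \<in> S" using f lvl_sub by blast
      have "\<not> c \<subseteq> f" using u fS by blast
      have "c \<subseteq> f \<or> (\<exists>g\<in>lvl (insert F S) d c (Suc k). card (f \<inter> g) = d)"
        using f by (simp only: lvl.simps(2) mem_Collect_eq)
      then have "\<exists>g\<in>insert F (lvl S d (F - {u}) k). card (f \<inter> g) = d"
        using \<open>\<not> c \<subseteq> f\<close> unfolding Suc.IH by blast
      then obtain g where g: "g \<in> insert F (lvl S d (F - {u}) k)" "card (f \<inter> g) = d"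
        by blast
      have uf: "u \<notin> f" using u fS by blast
      show ?thesis
      proof (cases "g = F")
        case True
        then have "F - {u} \<subseteq> f" using card_inter_old[of f d F u] cards fS u(1) uf g(2) by auto
        then show ?thesis using fS by simp
      next
        case False
        then show ?thesis using g fS by auto
      qed
    qed
  next
    fix f assume f: "f \<in> insert F (lvl S d (F - {u}) (Suc k))"
    show "f \<in> lvl (insert F S) d c (Suc (Suc k))"
    proof (cases "f = F")
      case True then show ?thesis using u by simp
    next
      case False
      then have fl: "f \<in> lvl S d (F - {u}) (Suc k)" using f by simp
      then have fS: "f \<in> S" using lvl_sub by blast
      have uf: "u \<notin> f" using u fS by blast
      have "F - {u} \<subseteq> f \<or> (\<exists>g\<in>lvl S d (F - {u}) k. card (f \<inter> g) = d)" using fl by simp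
      then have "\<exists>g\<in>insert F (lvl S d (F - {u}) k). card (f \<inter> g) = d"
        using card_inter_old[of f d F u] cards fS u(1) uf by auto
      then have "\<exists>g\<in>lvl (insert F S) d c (Suc k). card (f \<inter> g) = d"
        unfolding Suc.IH .
      then show ?thesis using fS by (simp only: lvl.simps(2) mem_Collect_eq) blast
    qed
  qed
qed

definition Q :: "'a set set \<Rightarrow> nat \<Rightarrow> bool" where
  "Q S d \<longleftrightarrow> (\<forall>c m v f f'. card c = d \<longrightarrow> (\<exists>h\<in>S. c \<subseteq> h) \<longrightarrow> 1 \<le> m \<longrightarrow>
     v \<in> lvlV S d c m \<longrightarrow> v \<notin> lvlV S d c (m - 1) \<longrightarrow> f \<in> lvl S d c m \<longrightarrow> f' \<in> lvl S d c m
     \<longrightarrow> v \<in> f \<longrightarrow> v \<in> f' \<longrightarrow> f = f')"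

lemma Q_single: "Q {F} d"
  unfolding Q_def using lvl_sub by blast

lemma Q_step:
  assumes Q: "Q S d" and cards: "\<forall>f\<in>S. card f = Suc d" "card F = Suc d"
    and u: "u \<in> F" "\<forall>h\<in>S. u \<notin> h" and h0: "h0 \<in> S" "F - {u} \<subseteq> h0"
  shows "Q (insert F S) d"
  unfolding Q_def
proof (intro allI impI)
  fix c m v f f'
  assume cc: "card c = d" and ch: "\<exists>h\<in>insert F S. c \<subseteq> h" and m1: "1 \<le> m"
    and vin: "v \<in> lvlV (insert F S) d c m" and vout: "v \<notin> lvlV (insert F S) d c (m - 1)"
    and fl: "f \<in> lvl (insert F S) d c m" and f'l: "f' \<in> lvl (insert F S) d c m"
    and vf: "v \<in> f" and vf': "v \<in> f'"
  have finF: "finite F" using cards(2) by (metis card.infinite nat.distinct(1))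
  have cB: "card (F - {u}) = d" using cards(2) u(1) by (metis card_Diff_singleton diff_Suc_1)
  obtain k where mk: "m = Suc k" using m1 by (cases m) auto
  show "f = f'"
  proof (cases "u \<in> c")
    case True
    have cF: "c \<subseteq> F" using ch u True by blast
    note eq = case2_lvl[OF cards u True cF]
    show ?thesis
    proof (cases k)
      case 0
      have e0: "lvl S d (F - {u}) 0 = {}" by simp
      have "lvl (insert F S) d c m = {F}" using eq[of 0] e0 mk 0 by (simp del: lvl.simps)
      then show ?thesis using fl f'l by simp
    next
      case (Suc j)
      have Vm1: "lvlV (insert F S) d c (m - 1) = \<Union>(insert F (lvl S d (F - {u}) j))"
        unfolding lvlV_def using mk Suc eq by simp
      have vF: "v \<notin> F" using vout Vm1 by blast
      have fl2: "f \<in> lvl S d (F - {u}) k" using fl eq mk vf vF by auto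
      have f'l2: "f' \<in> lvl S d (F - {u}) k" using f'l eq mk vf' vF by auto
      have vin2: "v \<in> lvlV S d (F - {u}) k" unfolding lvlV_def using Suc fl2 vf by auto
      have vout2: "v \<notin> lvlV S d (F - {u}) (k - 1)"
        unfolding lvlV_def using Suc vout Vm1 vF by auto
      have "(\<exists>h\<in>S. F - {u} \<subseteq> h)" using h0 by blast
      moreover have "1 \<le> k" using Suc by simp
      ultimately show ?thesis using Q[unfolded Q_def, rule_format, OF cB _ _ vin2 vout2 fl2 f'l2 vf vf'] by blast
    qed
  next
    case False
    note uc = False
    note L = case1_lvl[OF cards u uc]
    note LF = case1_F[OF cards u uc]
    show ?thesis
    proof (cases "v = u")
      case True
      have "f = F" using vf True u fl lvl_sub by blast
      moreover have "f' = F" using vf' True u f'l lvl_sub by blast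
      ultimately show ?thesis by simp
    next
      case False
      have noF: False if Fl: "F \<in> lvl (insert F S) d c m" and vF: "v \<in> F"
      proof -
        have vB: "v \<in> F - {u}" using vF False by simp
        have "c \<subseteq> F \<or> (\<exists>g\<in>lvl S d c k. F - {u} \<subseteq> g)" using LF Fl mk by simp
        then show False
        proof
          assume cF: "c \<subseteq> F"
          then have "c \<subseteq> F - {u}" using uc by blast
          then have "c = F - {u}" using card_subset_eq[of "F - {u}" c] finF cc cB by simp
          then have vc: "v \<in> c" using vB by simp
          show False
          proof (cases k)
            case 0 then show False using vout vc mk by (simp add: lvlV_def)
          next
            case (Suc j)
            have "F \<in> lvl (insert F S) d c (Suc 0)" using cF by simp
            then have "F \<in> lvl (insert F S) d c k" using lvl_mono[of "Suc 0" k] Suc by blast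
            then show False using vout vF mk Suc by (auto simp: lvlV_def)
          qed
        next
          assume "\<exists>g\<in>lvl S d c k. F - {u} \<subseteq> g"
          then obtain g where g: "g \<in> lvl S d c k" "F - {u} \<subseteq> g" by blast
          have k0: "k \<noteq> 0" using g(1) by (cases k) auto
          have gS: "g \<in> S" using g(1) lvl_sub by blast
          have "g \<in> lvl (insert F S) d c k" using L[OF gS] g(1) by blast
          then show False using vout vB g(2) mk k0 by (auto simp: lvlV_def)
        qed
      qed
      have fS: "f \<in> S" using fl noF vf lvl_sub by blast
      have f'S: "f' \<in> S" using f'l noF vf' lvl_sub by blast
      have fl2: "f \<in> lvl S d c m" using L[OF fS] fl by blast
      have f'l2: "f' \<in> lvl S d c m" using L[OF f'S] f'l by blast
      have vin2: "v \<in> lvlV S d c m" unfolding lvlV_def using mk fl2 vf by auto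
      have sub: "lvlV S d c (m - 1) \<subseteq> lvlV (insert F S) d c (m - 1)"
        unfolding lvlV_def using L lvl_sub by fastforce
      have vout2: "v \<notin> lvlV S d c (m - 1)" using sub vout by blast
      have "\<exists>h\<in>S. c \<subseteq> h"
      proof -
        obtain h where h: "h \<in> insert F S" "c \<subseteq> h" using ch by blast
        show ?thesis
        proof (cases "h = F")
          case True
          then have "c \<subseteq> h0" using h h0 uc by blast
          then show ?thesis using h0 by blast
        next
          case False then show ?thesis using h by blast
        qed
      qed
      then show ?thesis using Q[unfolded Q_def, rule_format, OF cc _ m1 vin2 vout2 fl2 f'l2 vf vf'] by blast
    qed
  qed
qed


lemma partA:
  assumes cards: "\<forall>f\<in>S. card f = Suc d" and cc: "card c = d"
    and m1: "1 \<le> m" and fl: "f \<in> lvl S d c m" and vf: "v \<in> f"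
    and vout: "v \<notin> lvlV S d c (m - 1)"
  shows "f - {v} \<subseteq> lvlV S d c (m - 1)"
proof -
  obtain k where mk: "m = Suc k" using m1 by (cases m) auto
  have fS: "f \<in> S" using fl lvl_sub by blast
  have cf: "card f = Suc d" using cards fS by blast
  have finf: "finite f" using cf by (metis card.infinite nat.distinct(1))
  have cfv: "card (f - {v}) = d" using cf vf finf by simp
  have alt: "c \<subseteq> f \<or> (\<exists>g\<in>lvl S d c k. card (f \<inter> g) = d)" using fl mk by simp
  show ?thesis
  proof (cases "c \<subseteq> f")
    case True
    show ?thesis
    proof (cases k)
      case 0
      then have vc: "v \<notin> c" using vout mk by (simp add: lvlV_def)
      then have "c \<subseteq> f - {v}" using True by blast
      then have "c = f - {v}" using card_subset_eq[of "f - {v}" c] finf cc cfv by simp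
      then show ?thesis using mk 0 by (simp add: lvlV_def)
    next
      case (Suc j)
      have "f \<in> lvl S d c (Suc 0)" using True fS by simp
      then have "f \<in> lvl S d c k" using lvl_mono[of "Suc 0" k] Suc by blast
      then have False using vout vf mk Suc by (auto simp: lvlV_def)
      then show ?thesis ..
    qed
  next
    case False
    then obtain g where g: "g \<in> lvl S d c k" "card (f \<inter> g) = d" using alt by blast
    have k0: "k \<noteq> 0" using g(1) by (cases k) auto
    have vg: "v \<notin> g" using vout g(1) mk k0 by (auto simp: lvlV_def)
    have "f \<inter> g \<subseteq> f - {v}" using vg by blast
    then have "f \<inter> g = f - {v}" using card_subset_eq[of "f - {v}" "f \<inter> g"] finf g(2) cfv by simp
    then have "f - {v} \<subseteq> g" by blast
    then show ?thesis using g(1) mk k0 by (auto simp: lvlV_def)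
  qed
qed

lemma Q_prefix:
  assumes ne: "fs \<noteq> []" and cards: "\<forall>f\<in>set fs. card f = Suc d"
    and st: "\<forall>p. 1 \<le> p \<and> p < length fs \<longrightarrow>
           (\<exists>v. fs ! p - \<Union>(set (take p fs)) = {v} \<and>
                (\<exists>j<p. fs ! p - {v} \<subseteq> fs ! j))"
  shows "1 \<le> n \<Longrightarrow> n \<le> length fs \<Longrightarrow> Q (set (take n fs)) d"
proof (induction n)
  case 0 then show ?case by simp
next
  case (Suc n)
  have tk: "set (take (Suc n) fs) = insert (fs ! n) (set (take n fs))"
    using Suc.prems by (simp add: take_Suc_conv_app_nth)
  show ?case
  proof (cases n)
    case 0
    then show ?thesis using tk Q_single by simp
  next
    case (Suc n')
    then have n1: "1 \<le> n" and nl: "n < length fs" using Suc.prems by auto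
    have IH: "Q (set (take n fs)) d" using Suc.IH n1 nl by simp
    obtain u j where u: "fs ! n - \<Union>(set (take n fs)) = {u}" and j: "j < n" "fs ! n - {u} \<subseteq> fs ! j"
      using st n1 nl by blast
    have cardsS: "\<forall>f\<in>set (take n fs). card f = Suc d" using cards by (meson in_set_takeD)
    have cardF: "card (fs ! n) = Suc d" using cards nl by simp
    have uF: "u \<in> fs ! n" using u by blast
    have uS: "\<forall>h\<in>set (take n fs). u \<notin> h" using u by blast
    have h0: "fs ! j \<in> set (take n fs)"
      using j nl by (metis in_set_conv_nth length_take min.absorb4 nth_take)
    show ?thesis using Q_step[OF IH cardsS cardF uF uS h0 j(2)] tk by simp
  qed
qed

theorem lemma2p10:
  fixes V :: "'a set" and X :: "'a set set" and d m :: nat and c :: "'a set" and v :: 'a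
  assumes "simplicial_complex V X"
    and "stacked X" and "pure X d"
    and "c \<in> X" and "card c = d"
    and "m \<ge> 1"
    and "v \<in> Vm X d c m - Vm X d c (m - 1)"
  shows "(\<exists>!f. f \<in> Xm X d c m \<and> v \<in> f) \<and>
         (\<forall>f. f \<in> Xm X d c m \<and> v \<in> f \<longrightarrow> f - {v} \<subseteq> Vm X d c (m - 1))"
proof -
  define S where "S = facets X"
  have cards: "\<forall>f\<in>S. card f = Suc d" using assms(3) unfolding pure_def S_def by simp
  obtain fs where fs: "fs \<noteq> []" "set fs = S"
    "\<forall>p. 1 \<le> p \<and> p < length fs \<longrightarrow>
           (\<exists>v. fs ! p - \<Union>(set (take p fs)) = {v} \<and> (\<exists>j<p. fs ! p - {v} \<subseteq> fs ! j))"
    using assms(2) unfolding stacked_def S_def by blast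
  have c2: "\<forall>f\<in>set fs. card f = Suc d" using cards fs(2) by simp
  have "1 \<le> length fs" using fs(1) by (cases fs) auto
  then have "Q (set (take (length fs) fs)) d"
    using Q_prefix[OF fs(1) c2 fs(3), of "length fs"] by simp
  then have Q: "Q S d" using fs(2) by simp
  have finX: "finite X"
  proof -
    have sub: "X \<subseteq> Pow V" using assms(1) unfolding simplicial_complex_def by blast
    have "finite V" using assms(1) unfolding simplicial_complex_def by blast
    then have "finite (Pow V)" by simp
    then show ?thesis using sub by (rule rev_finite_subset)
  qed
  have "\<exists>h\<in>S. c \<subseteq> h"
  proof -
    define A where "A = {G \<in> X. c \<subseteq> G}"
    have fin: "finite A" using finX unfolding A_def by simp
    have ne: "A \<noteq> {}" using assms(4) unfolding A_def by blast
    obtain h where h1: "h \<in> A" and h2: "\<forall>b\<in>A. h \<le> b \<longrightarrow> h = b"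
      using finite_has_maximal[OF fin ne] by (elim bexE)
    have h: "h \<in> {G \<in> X. c \<subseteq> G}" "\<forall>b\<in>{G \<in> X. c \<subseteq> G}. h \<le> b \<longrightarrow> h = b"
      using h1 h2 unfolding A_def by simp_all
    have hX: "h \<in> X" and ch: "c \<subseteq> h" using h(1) by simp_all
    have "\<forall>G\<in>X. h \<subseteq> G \<longrightarrow> G = h"
    proof (intro ballI impI)
      fix G assume G: "G \<in> X" "h \<subseteq> G"
      then have "G \<in> {G \<in> X. c \<subseteq> G}" using ch by blast
      then show "G = h" using h(2) G(2) by auto
    qed
    then have "h \<in> facets X" unfolding facets_def using hX by blast
    then show ?thesis using ch S_def by blast
  qed
  note Qc = Q[unfolded Q_def, rule_format, OF assms(5) this assms(6)]
  have vin: "v \<in> lvlV S d c m" and vout: "v \<notin> lvlV S d c (m - 1)"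
    using assms(7) unfolding Vm_lvl S_def by auto
  obtain f0 where f0: "f0 \<in> lvl S d c m" "v \<in> f0" using vin assms(6) by (auto simp: lvlV_def)
  have P1: "\<exists>!f. f \<in> lvl S d c m \<and> v \<in> f"
  proof (rule ex1I[of _ f0])
    show "f0 \<in> lvl S d c m \<and> v \<in> f0" using f0 by simp
  next
    fix f assume h: "f \<in> lvl S d c m \<and> v \<in> f"
    show "f = f0" using Qc[OF vin vout conjunct1[OF h] f0(1) conjunct2[OF h] f0(2)] .
  qed
  have P2: "\<forall>f. f \<in> lvl S d c m \<and> v \<in> f \<longrightarrow> f - {v} \<subseteq> lvlV S d c (m - 1)"
  proof (intro allI impI)
    fix f assume h: "f \<in> lvl S d c m \<and> v \<in> f"
    show "f - {v} \<subseteq> lvlV S d c (m - 1)"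
      using partA[OF cards assms(5) assms(6) conjunct1[OF h] conjunct2[OF h] vout] .
  qed
  have e1: "Xm X d c m = lvl S d c m" unfolding S_def by (rule Xm_lvl)
  have e2: "Vm X d c (m - 1) = lvlV S d c (m - 1)" unfolding S_def by (rule Vm_lvl)
  show ?thesis unfolding e1 e2 using P1 P2 by (rule conjI)
qed

end
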